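(* Let $q\in\mathbb{C}\setminus\{0,1,-1\}$, let $n$ be even, and let $V$ be the complex vector space with basis $\{\bar T_m:m\in\mathbb{Z}^2\}$. For $m,k\in\mathbb{Z}^2$ let $m\wedge k=m_1k_2-m_2k_1$. Define an $n$-linear bracket on $V$ by $$\llbracket\bar T_{i_1},\dots,\bar T_{i_n}\rrbracket=\frac{1}{q-q^{-1}}\sum_{\sigma\in S_n}\mathrm{sgn}(\sigma)\,q^{\sum_{1\le k<s\le n}i_{\sigma(k)}\wedge i_{\sigma(s)}}\;\bar T_{i_1+\cdots+i_n}.$$ Then $(V,\llbracket\cdot,\dots,\cdot\rrbracket)$ is a sh-$n$-Lie algebra.
   Context: A sh-$n$-Lie algebra is a vector space $V$ with an $n$-linear bracket that is skew-symmetric, $[x_{\sigma(1)},\dots,x_{\sigma(n)}]=\mathrm{sgn}(\sigma)[x_1,\dots,x_n]$, and satisfies the sh-Jacobi identity $$\sum_{\sigma\in Sh(n,n-1)}\mathrm{sgn}(\sigma)\big[[x_{\sigma(1)},\dots,x_{\sigma(n)}],x_{\sigma(n+1)},\dots,x_{\sigma(2n-1)}\big]=0$$ for all $x_1,\dots,x_{2n-1}\in V$, where $Sh(n,n-1)=\{\sigma\in S_{2n-1}:\sigma(1)<\dots<\sigma(n),\ \sigma(n+1)<\dots<\sigma(2n-1)\}$. This bracket is the $q$-deformed $SDiff(T^2)$ $n$-algebra. *)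

theory Defs
  imports Complex_Main "HOL-Combinatorics.Combinatorics" "HOL-Library.Product_Plus"
begin

text \<open>The vector space V with basis T_m (m in Z^2) is realised as the finitely
supported functions Z^2 -> C; the basis vector T_m is the indicator of m.\<close>

type_synonym vec = "int \<times> int \<Rightarrow> complex"

definition Vspace :: "vec set" where
  "Vspace = {f. finite {m. f m \<noteq> 0}}"

definition basisT :: "int \<times> int \<Rightarrow> vec" where
  "basisT m = (\<lambda>k. if k = m then 1 else 0)"

definition smul :: "complex \<Rightarrow> vec \<Rightarrow> vec" where
  "smul c f = (\<lambda>k. c * f k)"

definition wedge :: "int \<times> int \<Rightarrow> int \<times> int \<Rightarrow> int" where
  "wedge m k = fst m * snd k - snd m * fst k"

definition qbr_basis :: "complex \<Rightarrow> (int \<times> int) list \<Rightarrow> vec" where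
  "qbr_basis q is =
     smul ((1 / (q - inverse q)) *
           (\<Sum>\<sigma>\<in>{\<sigma>. \<sigma> permutes {..<length is}}.
              of_int (sign \<sigma>) *
              q powi (\<Sum>k<length is. \<Sum>s\<in>{k<..<length is}. wedge (is ! \<sigma> k) (is ! \<sigma> s))))
          (basisT (sum_list is))"

fun mlext :: "((int \<times> int) list \<Rightarrow> vec) \<Rightarrow> vec list \<Rightarrow> vec" where
  "mlext f [] = f []"
| "mlext f (v # vs) = (\<lambda>k. \<Sum>m\<in>{m. v m \<noteq> 0}. v m * mlext (\<lambda>ms. f (m # ms)) vs k)"

definition qbr :: "complex \<Rightarrow> vec list \<Rightarrow> vec" where
  "qbr q xs = mlext (qbr_basis q) xs"

definition sh_n_Lie :: "nat \<Rightarrow> (vec list \<Rightarrow> vec) \<Rightarrow> bool" where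
  "sh_n_Lie n br \<longleftrightarrow>
     (\<forall>xs. set xs \<subseteq> Vspace \<and> length xs = n \<longrightarrow> br xs \<in> Vspace) \<and>
     (\<forall>xs \<sigma>. set xs \<subseteq> Vspace \<and> length xs = n \<and> \<sigma> permutes {..<n} \<longrightarrow>
        br (map (\<lambda>k. xs ! \<sigma> k) [0..<n]) = smul (of_int (sign \<sigma>)) (br xs)) \<and>
     (\<forall>xs. set xs \<subseteq> Vspace \<and> length xs = 2 * n - 1 \<longrightarrow>
        (\<lambda>t. \<Sum>\<sigma>\<in>{\<sigma>. \<sigma> permutes {..<2 * n - 1} \<and>
                  (\<forall>i j. i < j \<and> j < n \<longrightarrow> \<sigma> i < \<sigma> j) \<and>
                  (\<forall>i j. n \<le> i \<and> i < j \<and> j < 2 * n - 1 \<longrightarrow> \<sigma> i < \<sigma> j)}.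
           of_int (sign \<sigma>) *
             br (br (map (\<lambda>k. xs ! \<sigma> k) [0..<n]) # map (\<lambda>k. xs ! \<sigma> k) [n..<2 * n - 1]) t)
        = (\<lambda>_. 0))"

end

theory Submission
  imports Defs
begin


lemma sign_conj:
  assumes "p permutes A" "bij_betw f A B" "\<And>x. x \<in> A \<Longrightarrow> f' (f x) = x" "finite A"
  shows "sign (\<lambda>x. if x \<in> B then f (p (f' x)) else x) = sign p"
    and "(\<lambda>x. if x \<in> B then f (p (f' x)) else x) permutes B"
proof -
  have pb: "permutes_bij p A B f f'" by (rule permutes_bij.intro) (use assms in auto)
  have "permutes_bij_finite p A B f f'"
    unfolding permutes_bij_finite_def permutes_bij_finite_axioms_def using pb assms(4) by simp
  then show "sign (\<lambda>x. if x \<in> B then f (p (f' x)) else x) = sign p"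
    by (rule permutes_bij_finite.sign_p')
  show "(\<lambda>x. if x \<in> B then f (p (f' x)) else x) permutes B"
    using permutes_bij.permutes_p'[OF pb] .
qed

fun om :: "(int \<times> int) list \<Rightarrow> int" where
  "om [] = 0"
| "om (x # xs) = wedge x (sum_list xs) + om xs"

lemma wedge_add_right: "wedge x (a + b) = wedge x a + wedge x b"
  by (simp add: wedge_def algebra_simps)
lemma wedge_add_left: "wedge (a + b) x = wedge a x + wedge b x"
  by (simp add: wedge_def algebra_simps)
lemma wedge_zero_right[simp]: "wedge x 0 = 0"
  by (simp add: wedge_def)
lemma wedge_zero_left[simp]: "wedge 0 x = 0"
  by (simp add: wedge_def)

lemma wedge_sum_left: "wedge (sum f A) x = (\<Sum>k\<in>A. wedge (f k) x)"
  by (induction A rule: infinite_finite_induct) (auto simp: wedge_add_left)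

lemma om_append: "om (xs @ ys) = om xs + om ys + wedge (sum_list xs) (sum_list ys)"
  by (induction xs) (auto simp: wedge_add_right wedge_add_left)

lemma om_block: "om (a @ b @ c) = om (a @ [sum_list b] @ c) + om b"
  by (simp add: om_append wedge_add_right wedge_add_left)

lemma W_om: "(\<Sum>k<m. \<Sum>s\<in>{k<..<m}. wedge (h k) (h s)) = om (map h [0..<m])"
proof (induction m)
  case 0 then show ?case by simp
next
  case (Suc m)
  have split: "\<And>k. k < m \<Longrightarrow> {k<..<Suc m} = insert m {k<..<m}" by auto
  have "(\<Sum>k<Suc m. \<Sum>s\<in>{k<..<Suc m}. wedge (h k) (h s))
      = (\<Sum>k<m. \<Sum>s\<in>{k<..<Suc m}. wedge (h k) (h s))"
  proof -
    have "{m<..<Suc m} = {}" by auto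
    then show ?thesis by simp
  qed
  also have "\<dots> = (\<Sum>k<m. (\<Sum>s\<in>{k<..<m}. wedge (h k) (h s)) + wedge (h k) (h m))"
    by (rule sum.cong) (auto simp: split)
  also have "\<dots> = om (map h [0..<m]) + wedge (sum h {..<m}) (h m)"
    by (simp add: sum.distrib Suc wedge_sum_left)
  also have "\<dots> = om (map h [0..<Suc m])"
    by (simp add: om_append interv_sum_list_conv_sum_set_nat atLeast0LessThan)
  finally show ?case .
qed

definition Acoef :: "complex \<Rightarrow> (int \<times> int) list \<Rightarrow> complex" where
  "Acoef q l = (\<Sum>\<pi>\<in>{\<pi>. \<pi> permutes {..<length l}}.
      of_int (sign \<pi>) * q powi om (map (\<lambda>k. l ! \<pi> k) [0..<length l]))"

lemma qbr_basis_Acoef: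
  "qbr_basis q is = smul (1 / (q - inverse q) * Acoef q is) (basisT (sum_list is))"
  unfolding qbr_basis_def Acoef_def W_om ..

lemma Acoef_perm:
  assumes "\<pi> permutes {..<length l}"
  shows "Acoef q (map (\<lambda>k. l ! \<pi> k) [0..<length l]) = of_int (sign \<pi>) * Acoef q l"
proof -
  let ?m = "length l"
  let ?F = "\<lambda>p. q powi om (map (\<lambda>k. l ! p k) [0..<?m])"
  have pl: "\<And>p k. p permutes {..<?m} \<Longrightarrow> k < ?m \<Longrightarrow> p k < ?m"
    using permutes_in_image by fastforce
  have "Acoef q (map (\<lambda>k. l ! \<pi> k) [0..<?m])
     = (\<Sum>p\<in>{p. p permutes {..<?m}}. of_int (sign p) * ?F (\<pi> \<circ> p))"
    unfolding Acoef_def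
  proof (rule sum.cong)
    fix p assume "p \<in> {p. p permutes {..<?m}}"
    then have e: "map (\<lambda>k. map (\<lambda>k. l ! \<pi> k) [0..<?m] ! p k) [0..<?m] = map (\<lambda>k. l ! (\<pi> \<circ> p) k) [0..<?m]"
      using pl by (intro map_cong) auto
    then show "of_int (sign p) * q powi om (map (\<lambda>k. map (\<lambda>k. l ! \<pi> k) [0..<?m] ! p k) [0..<length (map (\<lambda>k. l ! \<pi> k) [0..<?m])]) =
         of_int (sign p) * ?F (\<pi> \<circ> p)" by (simp only: length_map length_upt diff_zero e)
  qed simp
  also have "\<dots> = (\<Sum>p\<in>{p. p permutes {..<?m}}. of_int (sign (inv \<pi> \<circ> p)) * ?F (\<pi> \<circ> (inv \<pi> \<circ> p)))"
    by (rule setum_permutations_compose_left) (rule permutes_inv[OF assms])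
  also have "\<dots> = (\<Sum>p\<in>{p. p permutes {..<?m}}. of_int (sign \<pi>) * (of_int (sign p) * ?F p))"
  proof (rule sum.cong)
    fix p assume "p \<in> {p. p permutes {..<?m}}"
    then have p: "p permutes {..<?m}" by simp
    have pp: "permutation p" "permutation (inv \<pi>)"
      using p assms by (auto intro: permutes_imp_permutation permutes_inv)
    have "\<pi> \<circ> (inv \<pi> \<circ> p) = p"
      using permutes_inverses(1)[OF assms] by (auto simp: fun_eq_iff)
    moreover have "sign (inv \<pi> \<circ> p) = sign \<pi> * sign p"
      using sign_compose[OF pp(2) pp(1)] sign_inverse[OF permutes_imp_permutation[OF finite_lessThan assms]]
      by simp
    ultimately show "of_int (sign (inv \<pi> \<circ> p)) * ?F (\<pi> \<circ> (inv \<pi> \<circ> p)) = of_int (sign \<pi>) * (of_int (sign p) * ?F p)"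
      by simp
  qed simp
  also have "\<dots> = of_int (sign \<pi>) * Acoef q l"
    unfolding Acoef_def by (simp add: sum_distrib_left)
  finally show ?thesis by simp
qed



definition Rot :: "nat \<Rightarrow> nat \<Rightarrow> nat" where
  "Rot j i = (if i < j then i + 1 else if i = j then 0 else i)"
definition Cyc :: "nat \<Rightarrow> nat \<Rightarrow> nat \<Rightarrow> nat" where
  "Cyc a m i = (if i = a then a + m else if a < i \<and> i \<le> a + m then i - 1 else i)"
definition Th :: "nat \<Rightarrow> nat \<Rightarrow> nat \<Rightarrow> nat" where
  "Th n j i = (if i < j then n + i else if i < j + n then i - j else i)"

lemma Rot_Suc: "Rot (Suc j) = Rot j \<circ> Transposition.transpose j (Suc j)"
  by (auto simp: fun_eq_iff Rot_def Transposition.transpose_def)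

lemma Rot_perm: "Rot j permutes {..j} \<and> sign (Rot j) = (-1) ^ j"
proof (induction j)
  case 0
  have "Rot 0 = (\<lambda>x. x)" by (auto simp: fun_eq_iff Rot_def)
  then show ?case using permutes_id sign_id by (simp add: id_def)
next
  case (Suc j)
  have t: "Transposition.transpose j (Suc j) permutes {..Suc j}"
    by (rule permutes_swap_id) auto
  have r: "Rot j permutes {..Suc j}"
    using Suc.IH by (auto intro: permutes_subset)
  have "sign (Rot (Suc j)) = sign (Rot j) * sign (Transposition.transpose j (Suc j))"
    unfolding Rot_Suc
    by (rule sign_compose) (use r t in \<open>auto intro: permutes_imp_permutation\<close>)
  moreover have "Rot (Suc j) permutes {..Suc j}"
    unfolding Rot_Suc by (rule permutes_compose[OF t r])
  ultimately show ?case using Suc.IH by (simp add: sign_swap_id)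
qed

lemma Cyc_Suc: "Cyc a (Suc m) = Transposition.transpose (a + m) (a + m + 1) \<circ> Cyc a m"
  by (auto simp: fun_eq_iff Cyc_def Transposition.transpose_def)

lemma Cyc_perm: "Cyc a m permutes {a..a+m} \<and> sign (Cyc a m) = (-1) ^ m"
proof (induction m)
  case 0
  have "Cyc a 0 = (\<lambda>x. x)" by (auto simp: fun_eq_iff Cyc_def)
  then show ?case using permutes_id sign_id by (simp add: id_def)
next
  case (Suc m)
  have t: "Transposition.transpose (a + m) (a + m + 1) permutes {a..a + Suc m}"
    by (rule permutes_swap_id) auto
  have r: "Cyc a m permutes {a..a + Suc m}"
    using Suc.IH by (auto intro: permutes_subset)
  have "sign (Cyc a (Suc m)) = sign (Transposition.transpose (a + m) (a + m + 1)) * sign (Cyc a m)"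
    unfolding Cyc_Suc
    by (rule sign_compose) (use r t in \<open>auto intro: permutes_imp_permutation\<close>)
  moreover have "Cyc a (Suc m) permutes {a..a + Suc m}"
    unfolding Cyc_Suc by (rule permutes_compose[OF r t])
  ultimately show ?case using Suc.IH by (simp add: sign_swap_id)
qed

lemma Th_Suc: "Th n (Suc j) = Th n j \<circ> Cyc j n"
  by (auto simp: fun_eq_iff Th_def Cyc_def)

lemma Th_perm: "Th n j permutes {..<j+n} \<and> sign (Th n j) = (-1) ^ (n * j)"
proof (induction j)
  case 0
  have "Th n 0 = (\<lambda>x. x)" by (auto simp: fun_eq_iff Th_def)
  then show ?case using permutes_id sign_id by (simp add: id_def)
next
  case (Suc j)
  have t: "Cyc j n permutes {..<Suc j + n}"
    using Cyc_perm[of j n] by (auto intro: permutes_subset)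
  have r: "Th n j permutes {..<Suc j + n}"
    using Suc.IH by (auto intro: permutes_subset)
  have "sign (Th n (Suc j)) = sign (Th n j) * sign (Cyc j n)"
    unfolding Th_Suc
    by (rule sign_compose) (use r t in \<open>auto intro: permutes_imp_permutation\<close>)
  then have "sign (Th n (Suc j)) = (-1) ^ (n * Suc j)"
    using Suc.IH Cyc_perm[of j n] by (simp add: power_add)
  moreover have "Th n (Suc j) permutes {..<Suc j + n}"
    unfolding Th_Suc by (rule permutes_compose[OF t r])
  ultimately show ?case by simp
qed



lemma sign_comp_perm:
  assumes "\<tau> permutes {..<N::nat}" "\<pi> permutes {..<N}"
  shows "sign (\<tau> \<circ> \<pi>) = sign \<tau> * sign \<pi>"
  by (rule sign_compose) (rule permutes_imp_permutation[OF finite_lessThan assms(1)], rule permutes_imp_permutation[OF finite_lessThan assms(2)])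

lemma altsum:
  assumes "even n" "0 < n"
  shows "(\<Sum>\<rho>\<in>{\<rho>. \<rho> permutes {..<n}}. (-1::complex) ^ (inv \<rho> 0)) = 0"
proof -
  let ?P = "{\<rho>. \<rho> permutes {..<n}}"
  define s where "s v = (if v < n then (if even v then v + 1 else v - 1) else v)" for v :: nat
  have sA: "\<And>v. v < n \<Longrightarrow> s v < n"
  proof -
    fix v assume v: "v < n"
    show "s v < n"
    proof (cases "even v")
      case True
      then have "v + 1 < n" using v assms(1) by presburger
      then show ?thesis using v True by (simp add: s_def)
    qed (use v in \<open>auto simp: s_def\<close>)
  qed
  have ss: "\<And>v. s (s v) = v"
  proof -
    fix v
    show "s (s v) = v"
    proof (cases "v < n")
      case v: True
      show ?thesis
      proof (cases "even v")
        case True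
        then have "v + 1 < n" using v assms(1) by presburger
        then show ?thesis using True by (simp add: s_def)
      next
        case False
        then have "v \<ge> 1" "v - 1 < n" "even (v - 1)" using v by (auto elim: oddE)
        then show ?thesis using False v by (simp add: s_def)
      qed
    qed (simp add: s_def)
  qed
  have sperm: "s permutes {..<n}"
  proof (rule bij_imp_permutes)
    show "bij_betw s {..<n} {..<n}"
      by (rule bij_betw_byWitness[where f'=s]) (use ss sA in auto)
  qed (auto simp: s_def)
  have sign_s: "\<And>v. v < n \<Longrightarrow> (-1::complex) ^ s v = - ((-1) ^ v)"
  proof -
    fix v assume v: "v < n"
    show "(-1::complex) ^ s v = - ((-1) ^ v)"
    proof (cases "even v")
      case True
      then show ?thesis using v by (simp add: s_def)
    next
      case False
      then obtain w where w: "v = Suc w" by (cases v) auto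
      then show ?thesis using v False by (simp add: s_def)
    qed
  qed
  have "(\<Sum>\<rho>\<in>?P. (-1::complex) ^ (inv \<rho> 0)) = (\<Sum>\<rho>\<in>?P. (-1::complex) ^ (\<rho> 0))"
    using sum_permutations_inverse[of "\<lambda>\<rho>. (-1::complex) ^ (\<rho> 0)" "{..<n}"] by simp
  also have "\<dots> = (\<Sum>\<rho>\<in>?P. (-1::complex) ^ ((s \<circ> \<rho>) 0))"
    by (rule setum_permutations_compose_left[OF sperm])
  also have "\<dots> = (\<Sum>\<rho>\<in>?P. - ((-1::complex) ^ (\<rho> 0)))"
  proof (rule sum.cong)
    fix \<rho> assume "\<rho> \<in> ?P"
    then have "\<rho> 0 < n" using assms permutes_in_image by fastforce
    then show "(-1::complex) ^ ((s \<circ> \<rho>) 0) = - ((-1::complex) ^ (\<rho> 0))"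
      using sign_s by simp
  qed simp
  also have "\<dots> = - (\<Sum>\<rho>\<in>?P. (-1::complex) ^ (\<rho> 0))"
    by (simp add: sum_negf)
  finally show ?thesis
    using sum_permutations_inverse[of "\<lambda>\<rho>. (-1::complex) ^ (\<rho> 0)" "{..<n}"] by simp
qed

definition F1 :: "(nat \<Rightarrow> int \<times> int) \<Rightarrow> nat \<Rightarrow> (nat \<Rightarrow> nat) \<Rightarrow> (int \<times> int) list" where
  "F1 h n \<tau> = map (\<lambda>k. h (\<tau> k)) [0..<n]"
definition F2 :: "(nat \<Rightarrow> int \<times> int) \<Rightarrow> nat \<Rightarrow> (nat \<Rightarrow> nat) \<Rightarrow> (int \<times> int) list" where
  "F2 h n \<tau> = sum_list (F1 h n \<tau>) # map (\<lambda>k. h (\<tau> k)) [n..<2 * n - 1]"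

lemma length_F2: "0 < n \<Longrightarrow> length (F2 h n \<tau>) = n"
  by (simp add: F2_def)

lemma F2_nth: "0 < n \<Longrightarrow> i < n \<Longrightarrow>
  F2 h n \<tau> ! i = (if i = 0 then sum_list (F1 h n \<tau>) else h (\<tau> (n + i - 1)))"
  by (cases i) (auto simp: F2_def)

lemma weight_list1:
  assumes "j < n"
  shows "map (\<lambda>k. F2 h n \<tau> ! Rot j k) [0..<n]
       = map (\<lambda>k. h (\<tau> k)) [n..<n+j] @ [sum_list (F1 h n \<tau>)] @ map (\<lambda>k. h (\<tau> k)) [n+j..<2*n-1]"
proof (rule nth_equalityI)
  show "length (map (\<lambda>k. F2 h n \<tau> ! Rot j k) [0..<n]) =
    length (map (\<lambda>k. h (\<tau> k)) [n..<n+j] @ [sum_list (F1 h n \<tau>)] @ map (\<lambda>k. h (\<tau> k)) [n+j..<2*n-1])"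
    using assms by simp
next
  fix i assume "i < length (map (\<lambda>k. F2 h n \<tau> ! Rot j k) [0..<n])"
  then have i: "i < n" by simp
  have rl: "Rot j i < n" using i assms by (auto simp: Rot_def)
  show "map (\<lambda>k. F2 h n \<tau> ! Rot j k) [0..<n] ! i =
    (map (\<lambda>k. h (\<tau> k)) [n..<n+j] @ [sum_list (F1 h n \<tau>)] @ map (\<lambda>k. h (\<tau> k)) [n+j..<2*n-1]) ! i"
    using i assms rl by (auto simp: F2_nth nth_append Rot_def)
qed

lemma weight_list2:
  assumes "j < n"
  shows "map (\<lambda>k. h (\<tau> (Th n j k))) [0..<2*n-1]
       = map (\<lambda>k. h (\<tau> k)) [n..<n+j] @ F1 h n \<tau> @ map (\<lambda>k. h (\<tau> k)) [n+j..<2*n-1]"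
proof (rule nth_equalityI)
  show "length (map (\<lambda>k. h (\<tau> (Th n j k))) [0..<2*n-1]) =
    length (map (\<lambda>k. h (\<tau> k)) [n..<n+j] @ F1 h n \<tau> @ map (\<lambda>k. h (\<tau> k)) [n+j..<2*n-1])"
    using assms by (simp add: F1_def)
next
  fix i assume "i < length (map (\<lambda>k. h (\<tau> (Th n j k))) [0..<2*n-1])"
  then have i: "i < 2*n-1" by simp
  show "map (\<lambda>k. h (\<tau> (Th n j k))) [0..<2*n-1] ! i =
    (map (\<lambda>k. h (\<tau> k)) [n..<n+j] @ F1 h n \<tau> @ map (\<lambda>k. h (\<tau> k)) [n+j..<2*n-1]) ! i"
    using i assms by (auto simp: F1_def nth_append Th_def)
qed

lemma weight:
  assumes "j < n" "(q::complex) \<noteq> 0"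
  shows "q powi om (F1 h n \<tau>) * q powi om (map (\<lambda>k. F2 h n \<tau> ! Rot j k) [0..<n])
       = q powi om (map (\<lambda>k. h ((\<tau> \<circ> Th n j) k)) [0..<2*n-1])"
proof -
  have "om (map (\<lambda>k. h ((\<tau> \<circ> Th n j) k)) [0..<2*n-1])
      = om (map (\<lambda>k. F2 h n \<tau> ! Rot j k) [0..<n]) + om (F1 h n \<tau>)"
    using weight_list2[OF assms(1), of h \<tau>] weight_list1[OF assms(1), of h \<tau>] om_block
    by simp
  moreover have "q powi (om (map (\<lambda>k. F2 h n \<tau> ! Rot j k) [0..<n]) + om (F1 h n \<tau>))
     = q powi om (map (\<lambda>k. F2 h n \<tau> ! Rot j k) [0..<n]) * q powi om (F1 h n \<tau>)"
    using assms(2) by (simp add: power_int_add)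
  ultimately show ?thesis by (simp add: mult.commute)
qed



lemma per_rho:
  assumes "even n" "2 \<le> n" "(q::complex) \<noteq> 0" "\<rho> permutes {..<n}"
  shows "of_int (sign \<rho>) * (\<Sum>\<tau>\<in>{\<tau>. \<tau> permutes {..<2*n-1}}. of_int (sign \<tau>) * q powi om (F1 h n \<tau>) * q powi om (map (\<lambda>k. F2 h n \<tau> ! \<rho> k) [0..<n]))
       = (-1) ^ (inv \<rho> 0) * (\<Sum>\<tau>\<in>{\<tau>. \<tau> permutes {..<2*n-1}}. of_int (sign \<tau>) * q powi om (map (\<lambda>k. h (\<tau> k)) [0..<2*n-1]))"
proof -
  define N where "N = 2*n-1"
  let ?PU = "{\<tau>. \<tau> permutes {..<N}}"
  define X where "X \<tau> = q powi om (F1 h n \<tau>)" for \<tau>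
  define E where "E \<tau> = q powi om (map (\<lambda>k. h (\<tau> k)) [0..<N])" for \<tau>
  define Z where "Z \<tau> \<rho>' = q powi om (map (\<lambda>k. F2 h n \<tau> ! \<rho>' k) [0..<n])" for \<tau> \<rho>'
  define S where "S \<rho>' = (\<Sum>\<tau>\<in>?PU. of_int (sign \<tau>) * X \<tau> * Z \<tau> \<rho>')" for \<rho>'
  define Alt where "Alt = (\<Sum>\<tau>\<in>?PU. of_int (sign \<tau>) * E \<tau>)"
  have n0: "0 < n" using assms by simp
  define j where "j = inv \<rho> 0"
  have jn: "j < n" unfolding j_def using permutes_inv[OF assms(4)] n0 permutes_in_image by fastforce
  have rj: "\<rho> j = 0" unfolding j_def using permutes_inverses(1)[OF assms(4)] by simp
  define R where "R = Rot j"
  have Rp: "R permutes {..<n}" using Rot_perm[of j] jn unfolding R_def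
    by (auto intro: permutes_subset)
  have sR: "sign R = (-1) ^ j" using Rot_perm[of j] unfolding R_def by simp
  have Rj: "R j = 0" by (simp add: R_def Rot_def)
  define \<mu> where "\<mu> = \<rho> \<circ> inv R"
  have \<mu>p: "\<mu> permutes {..<n}" unfolding \<mu>_def by (rule permutes_compose[OF permutes_inv[OF Rp] assms(4)])
  have \<mu>R: "\<And>k. \<mu> (R k) = \<rho> k" unfolding \<mu>_def using permutes_inverses(2)[OF Rp] by simp
  have \<mu>0: "\<mu> 0 = 0"
  proof -
    have "inv R 0 = j" using permutes_inv_eq[OF Rp] Rj by simp
    then show ?thesis unfolding \<mu>_def using rj by simp
  qed
  have s\<mu>: "sign \<mu> = sign \<rho> * sign R"
  proof -
    have "sign \<mu> = sign \<rho> * sign (inv R)"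
      unfolding \<mu>_def by (rule sign_comp_perm[OF assms(4) permutes_inv[OF Rp]])
    then show ?thesis using sign_inverse[OF permutes_imp_permutation[OF finite_lessThan Rp]] by simp
  qed
  have \<mu>1: "\<mu> permutes {1..<n}"
    by (rule permutes_superset[OF \<mu>p]) (use \<mu>0 in \<open>auto simp: not_less_eq_eq\<close>)
  define \<mu>h where "\<mu>h = (\<lambda>x. if x \<in> {n..<N} then (\<lambda>i. i + (n - 1)) (\<mu> ((\<lambda>x. x - (n - 1)) x)) else x)"
  have bij: "bij_betw (\<lambda>i. i + (n - 1)) {1..<n} {n..<N}"
    by (rule bij_betw_byWitness[where f'="\<lambda>x. x - (n - 1)"]) (use n0 in \<open>auto simp: N_def\<close>)
  have s\<mu>h: "sign \<mu>h = sign \<mu>" and \<mu>hp': "\<mu>h permutes {n..<N}"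
    unfolding \<mu>h_def using sign_conj[OF \<mu>1 bij, of "\<lambda>x. x - (n - 1)"] n0 by auto
  have \<mu>hp: "\<mu>h permutes {..<N}" using \<mu>hp' by (rule permutes_subset) auto
  have \<mu>h_low: "\<And>k. k < n \<Longrightarrow> \<mu>h k = k" by (simp add: \<mu>h_def)
  have \<mu>h_high: "\<And>i. 1 \<le> i \<Longrightarrow> i < n \<Longrightarrow> \<mu>h (n + i - 1) = \<mu> i + (n - 1)"
    by (auto simp: \<mu>h_def N_def)
  have F1eq: "\<And>\<tau>. F1 h n (\<tau> \<circ> \<mu>h) = F1 h n \<tau>"
    unfolding F1_def by (auto intro!: map_cong simp: \<mu>h_low)
  have \<mu>lt: "\<And>i. i < n \<Longrightarrow> \<mu> i < n" using \<mu>p permutes_in_image by fastforce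
  have \<mu>nz: "\<And>i. i < n \<Longrightarrow> i \<noteq> 0 \<Longrightarrow> \<mu> i \<noteq> 0"
    using \<mu>0 permutes_inj[OF \<mu>p] by (metis injD)
  have Rlt: "\<And>k. k < n \<Longrightarrow> R k < n" using Rp permutes_in_image by fastforce
  have FZ: "\<And>\<tau>. Z (\<tau> \<circ> \<mu>h) R = Z \<tau> \<rho>"
  proof -
    fix \<tau>
    have "map (\<lambda>k. F2 h n (\<tau> \<circ> \<mu>h) ! R k) [0..<n] = map (\<lambda>k. F2 h n \<tau> ! \<rho> k) [0..<n]"
    proof (rule map_cong)
      fix k assume "k \<in> set [0..<n]"
      then have k: "k < n" by simp
      define i where "i = R k"
      have i: "i < n" using Rlt[OF k] by (simp add: i_def)
      have "\<rho> k = \<mu> i" using \<mu>R by (simp add: i_def)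
      moreover have "F2 h n (\<tau> \<circ> \<mu>h) ! i = F2 h n \<tau> ! (\<mu> i)"
      proof (cases "i = 0")
        case True
        then show ?thesis using \<mu>0 F1eq n0 by (simp add: F2_nth)
      next
        case False
        then have "1 \<le> i" by simp
        then show ?thesis using False \<mu>nz[OF i False] \<mu>lt[OF i] i n0 \<mu>h_high[of i]
          by (simp add: F2_nth add.commute)
      qed
      ultimately show "F2 h n (\<tau> \<circ> \<mu>h) ! R k = F2 h n \<tau> ! \<rho> k" by (simp add: i_def)
    qed simp
    then show "Z (\<tau> \<circ> \<mu>h) R = Z \<tau> \<rho>" unfolding Z_def by (simp only:)
  qed
  have "S R = (\<Sum>\<tau>\<in>?PU. of_int (sign (\<tau> \<circ> \<mu>h)) * X (\<tau> \<circ> \<mu>h) * Z (\<tau> \<circ> \<mu>h) R)"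
    unfolding S_def by (rule sum_permutations_compose_right[OF \<mu>hp])
  also have "\<dots> = (\<Sum>\<tau>\<in>?PU. of_int (sign \<mu>) * (of_int (sign \<tau>) * X \<tau> * Z \<tau> \<rho>))"
  proof (rule sum.cong)
    fix \<tau> assume "\<tau> \<in> ?PU"
    then have "sign (\<tau> \<circ> \<mu>h) = sign \<tau> * sign \<mu>h" using sign_comp_perm \<mu>hp by blast
    then show "of_int (sign (\<tau> \<circ> \<mu>h)) * X (\<tau> \<circ> \<mu>h) * Z (\<tau> \<circ> \<mu>h) R = of_int (sign \<mu>) * (of_int (sign \<tau>) * X \<tau> * Z \<tau> \<rho>)"
      using FZ F1eq s\<mu>h by (simp add: X_def)
  qed simp
  also have "\<dots> = of_int (sign \<mu>) * S \<rho>" unfolding S_def by (simp add: sum_distrib_left)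
  finally have SR: "S R = of_int (sign \<mu>) * S \<rho>" .
  define T where "T = Th n j"
  have Tp: "T permutes {..<N}" using Th_perm[of n j] jn unfolding T_def N_def
    by (auto intro: permutes_subset)
  have sT: "sign T = 1" using Th_perm[of n j] assms(1) unfolding T_def by (simp add: power_mult)
  have "S R = (\<Sum>\<tau>\<in>?PU. of_int (sign \<tau>) * E (\<tau> \<circ> T))"
    unfolding S_def
  proof (rule sum.cong)
    fix \<tau>
    show "of_int (sign \<tau>) * X \<tau> * Z \<tau> R = of_int (sign \<tau>) * E (\<tau> \<circ> T)"
      using weight[OF jn assms(3), of h \<tau>] unfolding X_def Z_def E_def R_def T_def N_def
      by (simp add: mult.assoc)
  qed simp
  also have "\<dots> = Alt"
  proof -
    have "Alt = (\<Sum>\<tau>\<in>?PU. of_int (sign (\<tau> \<circ> T)) * E (\<tau> \<circ> T))"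
      unfolding Alt_def by (rule sum_permutations_compose_right[OF Tp])
    also have "\<dots> = (\<Sum>\<tau>\<in>?PU. of_int (sign \<tau>) * E (\<tau> \<circ> T))"
    proof (rule sum.cong)
      fix \<tau> assume "\<tau> \<in> ?PU"
      then have "sign (\<tau> \<circ> T) = sign \<tau> * sign T" using sign_comp_perm Tp by blast
      then show "of_int (sign (\<tau> \<circ> T)) * E (\<tau> \<circ> T) = of_int (sign \<tau>) * E (\<tau> \<circ> T)"
        using sT by simp
    qed simp
    finally show ?thesis by simp
  qed
  finally have "of_int (sign \<mu>) * S \<rho> = Alt" using SR by simp
  then have "of_int (sign \<mu>) * (of_int (sign \<mu>) * S \<rho>) = of_int (sign \<mu>) * Alt" by simp
  then have "S \<rho> = of_int (sign \<mu>) * Alt"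
    by (simp flip: mult.assoc of_int_mult)
  then have "of_int (sign \<rho>) * S \<rho> = of_int (sign \<rho> * (sign \<rho> * sign R)) * Alt"
    using s\<mu> by (simp only: of_int_mult mult.assoc)
  also have "\<dots> = (-1) ^ j * Alt"
  proof -
    have "sign \<rho> * (sign \<rho> * sign R) = (-1) ^ j"
      using sR by (simp only: mult.assoc[symmetric] sign_idempotent mult_1)
    then show ?thesis by (simp only:) simp
  qed
  finally show ?thesis
    unfolding S_def Alt_def X_def Z_def E_def N_def j_def by simp
qed



definition Gt :: "complex \<Rightarrow> (nat \<Rightarrow> int \<times> int) \<Rightarrow> nat \<Rightarrow> (nat \<Rightarrow> nat) \<Rightarrow> complex" where
  "Gt q h n \<tau> = of_int (sign \<tau>) * Acoef q (F1 h n \<tau>) * Acoef q (F2 h n \<tau>)"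

lemma core_full:
  assumes "even n" "2 \<le> n" "(q::complex) \<noteq> 0"
  shows "(\<Sum>\<tau>\<in>{\<tau>. \<tau> permutes {..<2*n-1}}. Gt q h n \<tau>) = 0"
proof -
  define N where "N = 2*n-1"
  let ?PU = "{\<tau>. \<tau> permutes {..<N}}"
  let ?Pn = "{\<pi>. \<pi> permutes {..<n}}"
  define X where "X \<tau> = q powi om (F1 h n \<tau>)" for \<tau>
  define E where "E \<tau> = q powi om (map (\<lambda>k. h (\<tau> k)) [0..<N])" for \<tau>
  define Z where "Z \<tau> \<rho>' = q powi om (map (\<lambda>k. F2 h n \<tau> ! \<rho>' k) [0..<n])" for \<tau> \<rho>'
  define Alt where "Alt = (\<Sum>\<tau>\<in>?PU. of_int (sign \<tau>) * E \<tau>)"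
  define A2 where "A2 \<tau> = Acoef q (F2 h n \<tau>)" for \<tau>
  have n0: "0 < n" using assms by simp
  have nN: "n \<le> N" using assms by (simp add: N_def)
  have PnPU: "\<And>\<pi>. \<pi> permutes {..<n} \<Longrightarrow> \<pi> permutes {..<N}"
    using nN by (auto intro: permutes_subset)
  have A1: "\<And>\<tau>. Acoef q (F1 h n \<tau>) = (\<Sum>\<pi>\<in>?Pn. of_int (sign \<pi>) * X (\<tau> \<circ> \<pi>))"
  proof -
    fix \<tau>
    show "Acoef q (F1 h n \<tau>) = (\<Sum>\<pi>\<in>?Pn. of_int (sign \<pi>) * X (\<tau> \<circ> \<pi>))"
      unfolding Acoef_def
    proof (rule sum.cong)
      fix \<pi> assume "\<pi> \<in> ?Pn"
      then have p: "\<pi> permutes {..<n}" by simp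
      have "map (\<lambda>k. F1 h n \<tau> ! \<pi> k) [0..<length (F1 h n \<tau>)] = F1 h n (\<tau> \<circ> \<pi>)"
        unfolding F1_def using p permutes_in_image by (fastforce intro!: map_cong)
      then show "of_int (sign \<pi>) * q powi om (map (\<lambda>k. F1 h n \<tau> ! \<pi> k) [0..<length (F1 h n \<tau>)]) =
         of_int (sign \<pi>) * X (\<tau> \<circ> \<pi>)" unfolding X_def by (simp only:)
    qed (simp add: F1_def)
  qed
  have F2inv: "\<And>\<tau> \<pi>. \<pi> permutes {..<n} \<Longrightarrow> F2 h n (\<tau> \<circ> \<pi>) = F2 h n \<tau>"
  proof -
    fix \<tau> \<pi> assume p: "\<pi> permutes {..<n}"
    have "sum_list (F1 h n (\<tau> \<circ> \<pi>)) = sum_list (F1 h n \<tau>)"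
    proof -
      have "sum_list (F1 h n (\<tau> \<circ> \<pi>)) = (\<Sum>k\<in>{..<n}. h (\<tau> (\<pi> k)))"
        unfolding F1_def by (simp add: interv_sum_list_conv_sum_set_nat atLeast0LessThan)
      also have "\<dots> = (\<Sum>k\<in>{..<n}. h (\<tau> k))"
        using sum.permute[OF p, of "\<lambda>k. h (\<tau> k)"] by (simp add: o_def)
      also have "\<dots> = sum_list (F1 h n \<tau>)"
        unfolding F1_def by (simp add: interv_sum_list_conv_sum_set_nat atLeast0LessThan)
      finally show ?thesis .
    qed
    moreover have "map (\<lambda>k. h ((\<tau> \<circ> \<pi>) k)) [n..<2*n-1] = map (\<lambda>k. h (\<tau> k)) [n..<2*n-1]"
      using p by (auto intro!: map_cong simp: permutes_not_in)
    ultimately show "F2 h n (\<tau> \<circ> \<pi>) = F2 h n \<tau>" unfolding F2_def by simp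
  qed
  have sc: "\<And>\<tau> \<pi>. \<tau> \<in> ?PU \<Longrightarrow> \<pi> permutes {..<N} \<Longrightarrow> sign (\<tau> \<circ> \<pi>) = sign \<tau> * sign \<pi>"
    using sign_comp_perm by blast
  have "(\<Sum>\<tau>\<in>?PU. Gt q h n \<tau>)
      = (\<Sum>\<tau>\<in>?PU. \<Sum>\<pi>\<in>?Pn. of_int (sign \<tau>) * (of_int (sign \<pi>) * X (\<tau> \<circ> \<pi>)) * A2 \<tau>)"
    unfolding Gt_def A1 A2_def by (simp add: sum_distrib_left sum_distrib_right)
  also have "\<dots> = (\<Sum>\<pi>\<in>?Pn. \<Sum>\<tau>\<in>?PU. of_int (sign \<tau>) * (of_int (sign \<pi>) * X (\<tau> \<circ> \<pi>)) * A2 \<tau>)"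
    by (rule sum.swap)
  also have "\<dots> = (\<Sum>\<pi>\<in>?Pn. \<Sum>\<tau>\<in>?PU. of_int (sign \<tau>) * X \<tau> * A2 \<tau>)"
  proof (rule sum.cong)
    fix \<pi> assume "\<pi> \<in> ?Pn"
    then have p: "\<pi> permutes {..<n}" by simp
    have "(\<Sum>\<tau>\<in>?PU. of_int (sign \<tau>) * X \<tau> * A2 \<tau>)
        = (\<Sum>\<tau>\<in>?PU. of_int (sign (\<tau> \<circ> \<pi>)) * X (\<tau> \<circ> \<pi>) * A2 (\<tau> \<circ> \<pi>))"
      by (rule sum_permutations_compose_right[OF PnPU[OF p]])
    also have "\<dots> = (\<Sum>\<tau>\<in>?PU. of_int (sign \<tau>) * (of_int (sign \<pi>) * X (\<tau> \<circ> \<pi>)) * A2 \<tau>)"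
    proof (rule sum.cong)
      fix \<tau> assume t: "\<tau> \<in> ?PU"
      show "of_int (sign (\<tau> \<circ> \<pi>)) * X (\<tau> \<circ> \<pi>) * A2 (\<tau> \<circ> \<pi>) = of_int (sign \<tau>) * (of_int (sign \<pi>) * X (\<tau> \<circ> \<pi>)) * A2 \<tau>"
        using sc[OF t PnPU[OF p]] F2inv[OF p] unfolding A2_def by (simp add: mult.assoc)
    qed simp
    finally show "(\<Sum>\<tau>\<in>?PU. of_int (sign \<tau>) * (of_int (sign \<pi>) * X (\<tau> \<circ> \<pi>)) * A2 \<tau>) = (\<Sum>\<tau>\<in>?PU. of_int (sign \<tau>) * X \<tau> * A2 \<tau>)" by simp
  qed simp
  also have "\<dots> = of_nat (card ?Pn) * (\<Sum>\<tau>\<in>?PU. of_int (sign \<tau>) * X \<tau> * A2 \<tau>)"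
    by simp
  also have "(\<Sum>\<tau>\<in>?PU. of_int (sign \<tau>) * X \<tau> * A2 \<tau>)
      = (\<Sum>\<tau>\<in>?PU. \<Sum>\<rho>\<in>?Pn. of_int (sign \<rho>) * (of_int (sign \<tau>) * X \<tau> * Z \<tau> \<rho>))"
  proof (rule sum.cong)
    fix \<tau>
    have "A2 \<tau> = (\<Sum>\<rho>\<in>?Pn. of_int (sign \<rho>) * Z \<tau> \<rho>)"
      unfolding A2_def Acoef_def Z_def length_F2[OF n0] ..
    then show "of_int (sign \<tau>) * X \<tau> * A2 \<tau> = (\<Sum>\<rho>\<in>?Pn. of_int (sign \<rho>) * (of_int (sign \<tau>) * X \<tau> * Z \<tau> \<rho>))"
      by (simp add: sum_distrib_left mult.assoc mult.left_commute)
  qed simp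
  also have "\<dots> = (\<Sum>\<rho>\<in>?Pn. of_int (sign \<rho>) * (\<Sum>\<tau>\<in>?PU. of_int (sign \<tau>) * X \<tau> * Z \<tau> \<rho>))"
    by (subst sum.swap) (simp add: sum_distrib_left)
  also have "\<dots> = (\<Sum>\<rho>\<in>?Pn. (-1) ^ (inv \<rho> 0) * Alt)"
  proof (rule sum.cong)
    fix \<rho> assume "\<rho> \<in> ?Pn"
    then show "of_int (sign \<rho>) * (\<Sum>\<tau>\<in>?PU. of_int (sign \<tau>) * X \<tau> * Z \<tau> \<rho>) = (-1) ^ (inv \<rho> 0) * Alt"
      using per_rho[OF assms, of \<rho> h] unfolding X_def Z_def Alt_def E_def N_def by simp
  qed simp
  also have "\<dots> = 0" using altsum[OF assms(1) n0] by (simp add: sum_distrib_right[symmetric])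
  finally show ?thesis unfolding N_def by simp
qed



definition ShS :: "nat \<Rightarrow> nat \<Rightarrow> (nat \<Rightarrow> nat) set" where
  "ShS n N = {\<sigma>. \<sigma> permutes {..<N} \<and>
                  (\<forall>i j. i < j \<and> j < n \<longrightarrow> \<sigma> i < \<sigma> j) \<and>
                  (\<forall>i j. n \<le> i \<and> i < j \<and> j < N \<longrightarrow> \<sigma> i < \<sigma> j)}"

definition KS :: "nat \<Rightarrow> nat \<Rightarrow> (nat \<Rightarrow> nat) set" where
  "KS n N = {\<kappa>. \<kappa> permutes {..<N} \<and> \<kappa> ` {..<n} \<subseteq> {..<n}}"

definition shfI :: "nat \<Rightarrow> nat \<Rightarrow> nat set \<Rightarrow> nat \<Rightarrow> nat" where
  "shfI n N I i = (if i < n then sorted_list_of_set I ! i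
                   else if i < N then sorted_list_of_set ({..<N} - I) ! (i - n) else i)"

lemma sorted_map_mono:
  assumes "\<And>i j. a \<le> i \<Longrightarrow> i < j \<Longrightarrow> j < b \<Longrightarrow> \<sigma> i < \<sigma> j"
  shows "sorted_wrt (<) (map \<sigma> [a..<b])"
  unfolding sorted_wrt_iff_nth_less using assms by auto

lemma shf_of_sh:
  assumes "\<sigma> \<in> ShS n N" "n \<le> N"
  shows "shfI n N (\<sigma> ` {..<n}) = \<sigma>"
proof -
  have p: "\<sigma> permutes {..<N}" and m1: "\<And>i j. i < j \<Longrightarrow> j < n \<Longrightarrow> \<sigma> i < \<sigma> j"
    and m2: "\<And>i j. n \<le> i \<Longrightarrow> i < j \<Longrightarrow> j < N \<Longrightarrow> \<sigma> i < \<sigma> j"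
    using assms(1) by (auto simp: ShS_def)
  have inj: "inj \<sigma>" using permutes_inj[OF p] .
  have s1: "sorted_list_of_set (\<sigma> ` {..<n}) = map \<sigma> [0..<n]"
  proof (subst sorted_list_of_set_unique[symmetric])
    show "finite (\<sigma> ` {..<n})" by simp
    show "sorted_wrt (<) (map \<sigma> [0..<n]) \<and> set (map \<sigma> [0..<n]) = \<sigma> ` {..<n} \<and>
          length (map \<sigma> [0..<n]) = card (\<sigma> ` {..<n})"
      using sorted_map_mono[of 0 n \<sigma>] m1 card_image[OF inj_on_subset[OF inj subset_UNIV], of "{..<n}"]
      by (auto simp: atLeast0LessThan)
  qed
  have img: "{..<N} - \<sigma> ` {..<n} = \<sigma> ` {n..<N}"
  proof -
    have "\<sigma> ` {n..<N} = \<sigma> ` ({..<N} - {..<n})" by (rule arg_cong[where f="image \<sigma>"]) auto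
    also have "\<dots> = \<sigma> ` {..<N} - \<sigma> ` {..<n}" by (rule image_set_diff[OF inj])
    also have "\<dots> = {..<N} - \<sigma> ` {..<n}" using permutes_image[OF p] by simp
    finally show ?thesis by simp
  qed
  have s2: "sorted_list_of_set ({..<N} - \<sigma> ` {..<n}) = map \<sigma> [n..<N]"
  proof (subst sorted_list_of_set_unique[symmetric])
    show "finite ({..<N} - \<sigma> ` {..<n})" by simp
    show "sorted_wrt (<) (map \<sigma> [n..<N]) \<and> set (map \<sigma> [n..<N]) = {..<N} - \<sigma> ` {..<n} \<and>
          length (map \<sigma> [n..<N]) = card ({..<N} - \<sigma> ` {..<n})"
      unfolding img
      using sorted_map_mono[of n N \<sigma>] m2 card_image[OF inj_on_subset[OF inj subset_UNIV], of "{n..<N}"]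
      by auto
  qed
  show ?thesis
  proof
    fix i
    show "shfI n N (\<sigma> ` {..<n}) i = \<sigma> i"
      unfolding shfI_def s1 s2 using assms(2) permutes_not_in[OF p, of i] by auto
  qed
qed

lemma shf_props:
  assumes "\<tau> permutes {..<N}" "n \<le> N"
  shows "shfI n N (\<tau> ` {..<n}) \<in> ShS n N"
    and "shfI n N (\<tau> ` {..<n}) ` {..<n} = \<tau> ` {..<n}"
proof -
  define I where "I = \<tau> ` {..<n}"
  define f where "f = shfI n N I"
  define s where "s = sorted_list_of_set I"
  define c where "c = sorted_list_of_set ({..<N} - I)"
  have inj: "inj \<tau>" using permutes_inj[OF assms(1)] .
  have IN: "I \<subseteq> {..<N}" unfolding I_def using permutes_image[OF assms(1)] assms(2) by auto
  have cardI: "card I = n" unfolding I_def using card_image[OF inj_on_subset[OF inj subset_UNIV], of "{..<n}"] by simp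
  have ls: "length s = n" unfolding s_def using cardI by simp
  have lc: "length c = N - n" unfolding c_def using cardI IN
    by (simp add: card_Diff_subset finite_subset)
  have ss: "set s = I" unfolding s_def I_def by simp
  have sc: "set c = {..<N} - I" unfolding c_def by simp
  have f1: "f ` {..<n} = I"
  proof -
    have "f ` {..<n} = (\<lambda>i. s ! i) ` {..<n}" unfolding f_def shfI_def s_def by auto
    also have "\<dots> = set s" using ls by (auto simp: set_conv_nth)
    finally show ?thesis using ss by simp
  qed
  have f2: "f ` {n..<N} = {..<N} - I"
  proof -
    have "f ` {n..<N} = (\<lambda>i. c ! (i - n)) ` {n..<N}" unfolding f_def shfI_def c_def by auto
    also have "\<dots> = set c"
    proof
      show "(\<lambda>i. c ! (i - n)) ` {n..<N} \<subseteq> set c" using lc by auto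
      show "set c \<subseteq> (\<lambda>i. c ! (i - n)) ` {n..<N}"
      proof
        fix x assume "x \<in> set c"
        then obtain k where k: "k < length c" "x = c ! k" by (auto simp: set_conv_nth)
        then show "x \<in> (\<lambda>i. c ! (i - n)) ` {n..<N}" using lc
          by (intro image_eqI[where x="k + n"]) auto
      qed
    qed
    finally show ?thesis using sc by simp
  qed
  have fU: "f ` {..<N} = {..<N}"
  proof -
    have "{..<N} = {..<n} \<union> {n..<N}" using assms(2) by auto
    then have "f ` {..<N} = f ` {..<n} \<union> f ` {n..<N}" by (metis image_Un)
    then show ?thesis using f1 f2 IN by auto
  qed
  have fp: "f permutes {..<N}"
  proof (rule bij_imp_permutes)
    have "inj_on f {..<N}" by (rule eq_card_imp_inj_on) (simp_all add: fU)
    then show "bij_betw f {..<N} {..<N}" using fU by (simp add: bij_betw_def)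
  qed (use assms(2) in \<open>simp add: f_def shfI_def\<close>)
  have strict_s: "sorted_wrt (<) s" unfolding s_def by (rule strict_sorted_list_of_set)
  have strict_c: "sorted_wrt (<) c" unfolding c_def by (rule strict_sorted_list_of_set)
  have m1: "\<forall>i j. i < j \<and> j < n \<longrightarrow> f i < f j"
    using sorted_wrt_nth_less[OF strict_s] ls unfolding f_def shfI_def s_def by auto
  have m2: "\<forall>i j. n \<le> i \<and> i < j \<and> j < N \<longrightarrow> f i < f j"
  proof (intro allI impI)
    fix i j assume h: "n \<le> i \<and> i < j \<and> j < N"
    then have "c ! (i - n) < c ! (j - n)" using sorted_wrt_nth_less[OF strict_c, of "i - n" "j - n"] lc
      by auto
    then show "f i < f j" using h unfolding f_def shfI_def c_def by auto
  qed
  show "shfI n N (\<tau> ` {..<n}) \<in> ShS n N"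
    using fp m1 m2 unfolding ShS_def f_def I_def by blast
  show "shfI n N (\<tau> ` {..<n}) ` {..<n} = \<tau> ` {..<n}"
    using f1 unfolding f_def I_def .
qed

lemma KS_image:
  assumes "\<kappa> \<in> KS n N"
  shows "\<kappa> ` {..<n} = {..<n}"
proof -
  have "\<kappa> permutes {..<N}" "\<kappa> ` {..<n} \<subseteq> {..<n}" using assms by (auto simp: KS_def)
  then show ?thesis using endo_inj_surj[of "{..<n}" \<kappa>] permutes_inj
    by (metis finite_lessThan inj_on_subset subset_UNIV)
qed

lemma shuffle_decomp:
  fixes G :: "(nat \<Rightarrow> nat) \<Rightarrow> complex"
  assumes "n \<le> N"
    and inv: "\<And>\<tau> \<kappa>. \<tau> permutes {..<N} \<Longrightarrow> \<kappa> \<in> KS n N \<Longrightarrow> G (\<tau> \<circ> \<kappa>) = G \<tau>"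
  shows "(\<Sum>\<tau>\<in>{\<tau>. \<tau> permutes {..<N}}. G \<tau>) = of_nat (card (KS n N)) * (\<Sum>\<sigma>\<in>ShS n N. G \<sigma>)"
proof -
  let ?PU = "{\<tau>. \<tau> permutes {..<N}}"
  define \<Phi> where "\<Phi> = (\<lambda>(\<sigma>::nat \<Rightarrow> nat, \<kappa>::nat \<Rightarrow> nat). \<sigma> \<circ> \<kappa>)"
  define \<Psi> where "\<Psi> = (\<lambda>\<tau>::nat \<Rightarrow> nat. (shfI n N (\<tau> ` {..<n}), inv (shfI n N (\<tau> ` {..<n})) \<circ> \<tau>))"
  have bij: "bij_betw \<Phi> (ShS n N \<times> KS n N) ?PU"
  proof (rule bij_betw_byWitness[where f'=\<Psi>])
    show "\<forall>a\<in>ShS n N \<times> KS n N. \<Psi> (\<Phi> a) = a"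
    proof
      fix a assume "a \<in> ShS n N \<times> KS n N"
      then obtain \<sigma> \<kappa> where a: "a = (\<sigma>, \<kappa>)" "\<sigma> \<in> ShS n N" "\<kappa> \<in> KS n N" by auto
      have sp: "\<sigma> permutes {..<N}" using a(2) by (simp add: ShS_def)
      have "(\<sigma> \<circ> \<kappa>) ` {..<n} = \<sigma> ` (\<kappa> ` {..<n})" by (rule image_comp[symmetric])
      then have "(\<sigma> \<circ> \<kappa>) ` {..<n} = \<sigma> ` {..<n}" using KS_image[OF a(3)] by simp
      then have "shfI n N ((\<sigma> \<circ> \<kappa>) ` {..<n}) = \<sigma>" using shf_of_sh[OF a(2) assms(1)] by simp
      moreover have "inv \<sigma> \<circ> (\<sigma> \<circ> \<kappa>) = \<kappa>"
        using permutes_inverses(2)[OF sp] by (auto simp: fun_eq_iff)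
      ultimately show "\<Psi> (\<Phi> a) = a" unfolding \<Psi>_def \<Phi>_def a(1) by simp
    qed
    show "\<forall>a\<in>?PU. \<Phi> (\<Psi> a) = a"
    proof
      fix \<tau> assume "\<tau> \<in> ?PU"
      then have "\<tau> permutes {..<N}" by simp
      then have "shfI n N (\<tau> ` {..<n}) permutes {..<N}" using shf_props(1)[OF _ assms(1)] by (simp add: ShS_def)
      then show "\<Phi> (\<Psi> \<tau>) = \<tau>" unfolding \<Psi>_def \<Phi>_def
        using permutes_inverses(1) by (fastforce simp: fun_eq_iff)
    qed
    show "\<Phi> ` (ShS n N \<times> KS n N) \<subseteq> ?PU"
      unfolding \<Phi>_def ShS_def KS_def by (auto intro: permutes_compose)
    show "\<Psi> ` ?PU \<subseteq> ShS n N \<times> KS n N"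
    proof
      fix x assume "x \<in> \<Psi> ` ?PU"
      then obtain \<tau> where t: "\<tau> permutes {..<N}" "x = \<Psi> \<tau>" by auto
      define f where "f = shfI n N (\<tau> ` {..<n})"
      have fS: "f \<in> ShS n N" using shf_props(1)[OF t(1) assms(1)] by (simp add: f_def)
      then have fp: "f permutes {..<N}" by (simp add: ShS_def)
      have fi: "f ` {..<n} = \<tau> ` {..<n}" using shf_props(2)[OF t(1) assms(1)] by (simp add: f_def)
      have "inv f \<circ> \<tau> \<in> KS n N"
        unfolding KS_def
      proof (intro CollectI conjI)
        show "inv f \<circ> \<tau> permutes {..<N}" by (rule permutes_compose[OF t(1) permutes_inv[OF fp]])
        show "(inv f \<circ> \<tau>) ` {..<n} \<subseteq> {..<n}"
        proof
          fix y assume "y \<in> (inv f \<circ> \<tau>) ` {..<n}"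
          then obtain k where k: "k < n" "y = inv f (\<tau> k)" by auto
          then have "\<tau> k \<in> f ` {..<n}" using fi by auto
          then obtain i where i: "i < n" "\<tau> k = f i" by auto
          then show "y \<in> {..<n}" using k permutes_inverses(2)[OF fp] by simp
        qed
      qed
      then show "x \<in> ShS n N \<times> KS n N" using fS t(2) unfolding \<Psi>_def f_def by simp
    qed
  qed
  have "(\<Sum>\<tau>\<in>?PU. G \<tau>) = (\<Sum>x\<in>ShS n N \<times> KS n N. G (\<Phi> x))"
    by (rule sum.reindex_bij_betw[OF bij, symmetric])
  also have "\<dots> = (\<Sum>\<sigma>\<in>ShS n N. \<Sum>\<kappa>\<in>KS n N. G (\<sigma> \<circ> \<kappa>))"
    unfolding \<Phi>_def sum.cartesian_product by (rule sum.cong) auto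
  also have "\<dots> = (\<Sum>\<sigma>\<in>ShS n N. \<Sum>\<kappa>\<in>KS n N. G \<sigma>)"
  proof (rule sum.cong[OF refl], rule sum.cong[OF refl])
    fix \<sigma> \<kappa> assume "\<sigma> \<in> ShS n N" "\<kappa> \<in> KS n N"
    then show "G (\<sigma> \<circ> \<kappa>) = G \<sigma>" using inv by (simp add: ShS_def)
  qed
  also have "\<dots> = of_nat (card (KS n N)) * (\<Sum>\<sigma>\<in>ShS n N. G \<sigma>)"
    by (simp add: sum_distrib_left)
  finally show ?thesis .
qed

lemma card_KS_pos: "card (KS n N) \<noteq> 0"
proof -
  have "finite (KS n N)"
    by (rule finite_subset[OF _ finite_permutations[OF finite_lessThan[of N]]]) (auto simp: KS_def)
  moreover have "id \<in> KS n N" by (simp add: KS_def permutes_id)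
  ultimately show ?thesis by auto
qed



lemma Gt_inv:
  assumes "2 \<le> n" "\<tau> permutes {..<2*n-1}" "\<kappa> \<in> KS n (2*n-1)"
  shows "Gt q h n (\<tau> \<circ> \<kappa>) = Gt q h n \<tau>"
proof -
  define N where "N = 2*n-1"
  have n0: "0 < n" and nN: "n \<le> N" using assms(1) by (auto simp: N_def)
  have kp: "\<kappa> permutes {..<N}" using assms(3) by (simp add: KS_def N_def)
  have kimg: "\<kappa> ` {..<n} = {..<n}" using KS_image[OF assms(3)] .
  have kinj: "inj \<kappa>" using permutes_inj[OF kp] .
  have kimg2: "\<kappa> ` {n..<N} = {n..<N}"
  proof -
    have "\<kappa> ` {n..<N} = \<kappa> ` ({..<N} - {..<n})" by (rule arg_cong[where f="image \<kappa>"]) auto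
    also have "\<dots> = \<kappa> ` {..<N} - \<kappa> ` {..<n}" by (rule image_set_diff[OF kinj])
    also have "\<dots> = {n..<N}" using permutes_image[OF kp] kimg by auto
    finally show ?thesis .
  qed
  define k1 where "k1 = (\<lambda>i. if i < n then \<kappa> i else i)"
  define k2 where "k2 = (\<lambda>i. if i < n then i else \<kappa> i)"
  have k1p: "k1 permutes {..<n}"
  proof (rule bij_imp_permutes)
    have "bij_betw \<kappa> {..<n} {..<n}" using kimg inj_on_subset[OF kinj subset_UNIV] by (simp add: bij_betw_def)
    then show "bij_betw k1 {..<n} {..<n}" by (rule bij_betw_cong[THEN iffD1, rotated]) (simp add: k1_def)
  qed (simp add: k1_def)
  have k2p: "k2 permutes {n..<N}"
  proof (rule bij_imp_permutes)
    have "bij_betw \<kappa> {n..<N} {n..<N}" using kimg2 inj_on_subset[OF kinj subset_UNIV] by (simp add: bij_betw_def)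
    then show "bij_betw k2 {n..<N} {n..<N}" by (rule bij_betw_cong[THEN iffD1, rotated]) (simp add: k2_def)
  next
    fix x assume "x \<notin> {n..<N}"
    then show "k2 x = x" using permutes_not_in[OF kp, of x] by (auto simp: k2_def)
  qed
  have k2ge: "\<And>i. n \<le> i \<Longrightarrow> n \<le> \<kappa> i"
  proof -
    fix i assume i: "n \<le> i"
    show "n \<le> \<kappa> i"
    proof (cases "i < N")
      case True then have "\<kappa> i \<in> {n..<N}" using kimg2 i by auto
      then show ?thesis by simp
    next
      case False then show ?thesis using permutes_not_in[OF kp, of i] i by simp
    qed
  qed
  have keq: "\<kappa> = k1 \<circ> k2"
  proof
    fix x show "\<kappa> x = (k1 \<circ> k2) x"
      using k2ge[of x] by (cases "x < n") (auto simp: k1_def k2_def)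
  qed
  have k1U: "k1 permutes {..<N}" using k1p nN by (auto intro: permutes_subset)
  have k2U: "k2 permutes {..<N}" using k2p by (auto intro: permutes_subset)
  have sk: "sign \<kappa> = sign k1 * sign k2" unfolding keq by (rule sign_comp_perm[OF k1U k2U])
  have F1k: "F1 h n (\<tau> \<circ> \<kappa>) = map (\<lambda>k. F1 h n \<tau> ! k1 k) [0..<length (F1 h n \<tau>)]"
    unfolding F1_def length_map length_upt diff_zero
  proof (rule map_cong[OF refl])
    fix k assume "k \<in> set [0..<n]"
    then have k: "k < n" by simp
    then have "k1 k < n" using k1p permutes_in_image by fastforce
    then show "h ((\<tau> \<circ> \<kappa>) k) = map (\<lambda>k. h (\<tau> k)) [0..<n] ! k1 k" using k by (simp add: k1_def)
  qed
  have A1: "Acoef q (F1 h n (\<tau> \<circ> \<kappa>)) = of_int (sign k1) * Acoef q (F1 h n \<tau>)"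
    unfolding F1k by (rule Acoef_perm) (use k1p in \<open>simp add: F1_def\<close>)
  define k2' where "k2' = (\<lambda>y. if y \<in> {1..<n} then (\<lambda>x. x - (n - 1)) (k2 ((\<lambda>y. y + (n - 1)) y)) else y)"
  have bij: "bij_betw (\<lambda>x. x - (n - 1)) {n..<N} {1..<n}"
    by (rule bij_betw_byWitness[where f'="\<lambda>y. y + (n - 1)"]) (use n0 in \<open>auto simp: N_def\<close>)
  have sk2': "sign k2' = sign k2" and k2'p1: "k2' permutes {1..<n}"
    unfolding k2'_def using sign_conj[OF k2p bij, of "\<lambda>y. y + (n - 1)"] n0 by (auto simp: N_def)
  have k2'p: "k2' permutes {..<n}" using k2'p1 by (rule permutes_subset) auto
  have sumeq: "sum_list (F1 h n (\<tau> \<circ> \<kappa>)) = sum_list (F1 h n \<tau>)"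
  proof -
    have "sum_list (F1 h n (\<tau> \<circ> \<kappa>)) = (\<Sum>k\<in>{..<n}. h (\<tau> (k1 k)))"
      unfolding F1_def by (simp add: interv_sum_list_conv_sum_set_nat atLeast0LessThan k1_def)
    also have "\<dots> = (\<Sum>k\<in>{..<n}. h (\<tau> k))"
      using sum.permute[OF k1p, of "\<lambda>k. h (\<tau> k)"] by (simp add: o_def)
    also have "\<dots> = sum_list (F1 h n \<tau>)"
      unfolding F1_def by (simp add: interv_sum_list_conv_sum_set_nat atLeast0LessThan)
    finally show ?thesis .
  qed
  have F2k: "F2 h n (\<tau> \<circ> \<kappa>) = map (\<lambda>k. F2 h n \<tau> ! k2' k) [0..<length (F2 h n \<tau>)]"
  proof (rule nth_equalityI)
    show "length (F2 h n (\<tau> \<circ> \<kappa>)) = length (map (\<lambda>k. F2 h n \<tau> ! k2' k) [0..<length (F2 h n \<tau>)])"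
      by (simp add: length_F2[OF n0])
  next
    fix i assume "i < length (F2 h n (\<tau> \<circ> \<kappa>))"
    then have i: "i < n" by (simp add: length_F2[OF n0])
    show "F2 h n (\<tau> \<circ> \<kappa>) ! i = map (\<lambda>k. F2 h n \<tau> ! k2' k) [0..<length (F2 h n \<tau>)] ! i"
    proof (cases "i = 0")
      case True
      then have "k2' i = 0" by (simp add: k2'_def)
      then show ?thesis using True i n0 sumeq by (simp add: length_F2 F2_nth)
    next
      case False
      then have i1: "i \<in> {1..<n}" using i by simp
      have m: "n + i - 1 \<in> {n..<N}" using i1 by (auto simp: N_def)
      have "1 \<le> i" using i1 by simp
      then have "n \<le> n + i - 1" by linarith
      then have ge: "n \<le> \<kappa> (n + i - 1)" by (rule k2ge)
      have lt: "\<kappa> (n + i - 1) < N" using kimg2 m by auto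
      have k2'i: "k2' i = \<kappa> (n + i - 1) - (n - 1)"
      proof -
        have e: "i + (n - 1) = n + i - 1" "\<not> (i + (n - 1) < n)" using \<open>1 \<le> i\<close> n0 by linarith+
        have a: "k2' i = k2 (i + (n - 1)) - (n - 1)" using i1 by (simp add: k2'_def)
        have b: "k2 (n + i - 1) = \<kappa> (n + i - 1)" unfolding k2_def using \<open>n \<le> n + i - 1\<close> by simp
        show ?thesis unfolding a e(1) b ..
      qed
      have "k2' i \<in> {1..<n}" using k2'p1 i1 permutes_in_image by fastforce
      then show ?thesis using False i n0 k2'i ge lt
        by (simp add: length_F2 F2_nth)
    qed
  qed
  have A2: "Acoef q (F2 h n (\<tau> \<circ> \<kappa>)) = of_int (sign k2') * Acoef q (F2 h n \<tau>)"
    unfolding F2k by (rule Acoef_perm) (use k2'p in \<open>simp add: length_F2[OF n0]\<close>)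
  have st: "sign (\<tau> \<circ> \<kappa>) = sign \<tau> * sign \<kappa>"
    by (rule sign_comp_perm[OF assms(2)[folded N_def] kp])
  show ?thesis
    unfolding Gt_def A1 A2 st sk sk2'
    by (simp add: mult_ac) (simp flip: of_int_mult add: mult.assoc[symmetric])
qed

lemma core_shuffle:
  assumes "even n" "2 \<le> n" "(q::complex) \<noteq> 0"
  shows "(\<Sum>\<sigma>\<in>ShS n (2*n-1). Gt q h n \<sigma>) = 0"
proof -
  have "of_nat (card (KS n (2*n-1))) * (\<Sum>\<sigma>\<in>ShS n (2*n-1). Gt q h n \<sigma>) = 0"
    using shuffle_decomp[of n "2*n-1" "Gt q h n"] Gt_inv[OF assms(2)] core_full[OF assms, of h] assms(2)
    by simp
  then show ?thesis using card_KS_pos by simp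
qed



definition LS :: "vec list \<Rightarrow> (int \<times> int) list set" where
  "LS xs = {ms. length ms = length xs \<and> (\<forall>i<length xs. (xs ! i) (ms ! i) \<noteq> 0)}"

definition PR :: "vec list \<Rightarrow> (int \<times> int) list \<Rightarrow> complex" where
  "PR xs ms = (\<Prod>i<length xs. (xs ! i) (ms ! i))"

lemma PR_Cons: "PR (v # vs) (m # ms) = v m * PR vs ms"
  unfolding PR_def by (simp only: length_Cons prod.lessThan_Suc_shift nth_Cons_0 nth_Cons_Suc)

lemma LS_Nil: "LS [] = {[]}" by (auto simp: LS_def)

lemma LS_Cons_bij: "bij_betw (\<lambda>(m, ms). m # ms) ({m. v m \<noteq> 0} \<times> LS vs) (LS (v # vs))"
proof (rule bij_betw_byWitness[where f'="\<lambda>l. (hd l, tl l)"])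
  show "\<forall>a\<in>{m. v m \<noteq> 0} \<times> LS vs. (\<lambda>l. (hd l, tl l)) ((\<lambda>(m, ms). m # ms) a) = a" by auto
  show "\<forall>a'\<in>LS (v # vs). (\<lambda>(m, ms). m # ms) ((\<lambda>l. (hd l, tl l)) a') = a'"
  proof
    fix l assume "l \<in> LS (v # vs)"
    then have "l \<noteq> []" by (auto simp: LS_def)
    then show "(\<lambda>(m, ms). m # ms) ((\<lambda>l. (hd l, tl l)) l) = l" by simp
  qed
  show "(\<lambda>(m, ms). m # ms) ` ({m. v m \<noteq> 0} \<times> LS vs) \<subseteq> LS (v # vs)"
    by (auto simp: LS_def nth_Cons split: nat.splits)
  show "(\<lambda>l. (hd l, tl l)) ` LS (v # vs) \<subseteq> {m. v m \<noteq> 0} \<times> LS vs"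
  proof
    fix x assume "x \<in> (\<lambda>l. (hd l, tl l)) ` LS (v # vs)"
    then obtain l where l: "l \<in> LS (v # vs)" "x = (hd l, tl l)" by auto
    then obtain a r where ar: "l = a # r" by (cases l) (auto simp: LS_def)
    have "length r = length vs" "v a \<noteq> 0" "\<forall>i<length vs. (vs ! i) (r ! i) \<noteq> 0"
      using l(1) unfolding ar LS_def by (auto dest: spec[where x="Suc _"] spec[where x=0])
    then show "x \<in> {m. v m \<noteq> 0} \<times> LS vs" using l(2) ar by (auto simp: LS_def)
  qed
qed

lemma mlext_closed: "mlext f xs k = (\<Sum>ms\<in>LS xs. PR xs ms * f ms k)"
proof (induction xs arbitrary: f)
  case Nil
  then show ?case by (simp add: LS_Nil PR_def)
next
  case (Cons v vs)
  have "mlext f (v # vs) k = (\<Sum>m\<in>{m. v m \<noteq> 0}. v m * (\<Sum>ms\<in>LS vs. PR vs ms * f (m # ms) k))"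
    by (simp add: Cons.IH)
  also have "\<dots> = (\<Sum>(m, ms)\<in>{m. v m \<noteq> 0} \<times> LS vs. PR (v # vs) (m # ms) * f (m # ms) k)"
    by (simp add: sum_distrib_left sum.cartesian_product PR_Cons mult.assoc)
  also have "\<dots> = (\<Sum>x\<in>{m. v m \<noteq> 0} \<times> LS vs. (\<lambda>l. PR (v # vs) l * f l k) ((\<lambda>(m, ms). m # ms) x))"
    by (rule sum.cong) auto
  also have "\<dots> = (\<Sum>l\<in>LS (v # vs). PR (v # vs) l * f l k)"
    by (rule sum.reindex_bij_betw[OF LS_Cons_bij])
  finally show ?case .
qed

lemma finite_LS:
  assumes "set xs \<subseteq> Vspace"
  shows "finite (LS xs)"
proof -
  let ?A = "\<Union>x\<in>set xs. {m. x m \<noteq> 0}"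
  have fA: "finite ?A" using assms by (auto simp: Vspace_def)
  have "LS xs \<subseteq> {ms. set ms \<subseteq> ?A \<and> length ms = length xs}"
  proof
    fix ms assume "ms \<in> LS xs"
    then have ms: "length ms = length xs" "\<forall>i<length xs. (xs ! i) (ms ! i) \<noteq> 0" by (auto simp: LS_def)
    have "set ms \<subseteq> ?A"
    proof
      fix m assume "m \<in> set ms"
      then obtain i where "i < length ms" "m = ms ! i" by (auto simp: set_conv_nth)
      then show "m \<in> ?A" using ms by (auto intro!: bexI[where x="xs ! i"])
    qed
    then show "ms \<in> {ms. set ms \<subseteq> ?A \<and> length ms = length xs}" using ms by simp
  qed
  then show ?thesis using finite_lists_length_eq[OF fA] by (rule finite_subset)
qed

lemma qbr_closed: "qbr q xs = (\<lambda>k. \<Sum>ms\<in>LS xs. PR xs ms * qbr_basis q ms k)"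
  unfolding qbr_def by (rule ext) (rule mlext_closed)

lemma qbr_basis_apply: "qbr_basis q ms k = 1 / (q - inverse q) * Acoef q ms * (if k = sum_list ms then 1 else 0)"
  unfolding qbr_basis_Acoef smul_def basisT_def by simp

lemma qbr_in_V:
  assumes "set xs \<subseteq> Vspace"
  shows "qbr q xs \<in> Vspace"
proof -
  have "{k. qbr q xs k \<noteq> 0} \<subseteq> sum_list ` LS xs"
  proof
    fix k assume k: "k \<in> {k. qbr q xs k \<noteq> 0}"
    show "k \<in> sum_list ` LS xs"
    proof (rule ccontr)
      assume "k \<notin> sum_list ` LS xs"
      then have "qbr q xs k = 0" unfolding qbr_closed qbr_basis_apply
        by (intro sum.neutral) force
      then show False using k by simp
    qed
  qed
  then show ?thesis unfolding Vspace_def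
    using finite_LS[OF assms] by (auto intro: finite_subset)
qed

lemma sum_list_perm:
  fixes J :: "'a::comm_monoid_add list"
  assumes "\<sigma> permutes {..<length J}"
  shows "sum_list (map (\<lambda>k. J ! \<sigma> k) [0..<length J]) = sum_list J"
proof -
  have "sum_list (map (\<lambda>k. J ! \<sigma> k) [0..<length J]) = (\<Sum>k\<in>{..<length J}. J ! \<sigma> k)"
    by (simp add: interv_sum_list_conv_sum_set_nat atLeast0LessThan)
  also have "\<dots> = (\<Sum>k\<in>{..<length J}. J ! k)"
    using sum.permute[OF assms, of "\<lambda>k. J ! k"] by (simp add: o_def)
  also have "\<dots> = sum_list J" by (simp add: sum_list_sum_nth atLeast0LessThan)
  finally show ?thesis .
qed

lemma LS_perm:
  assumes "length xs = N" "\<sigma> permutes {..<N}"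
  shows "(\<Sum>K\<in>LS (map (\<lambda>k. xs ! \<sigma> k) [0..<N]). PR (map (\<lambda>k. xs ! \<sigma> k) [0..<N]) K * \<Phi> K)
       = (\<Sum>J\<in>LS xs. PR xs J * \<Phi> (map (\<lambda>k. J ! \<sigma> k) [0..<N]))"
proof -
  let ?ys = "map (\<lambda>k. xs ! \<sigma> k) [0..<N]"
  have lt: "\<And>k. k < N \<Longrightarrow> \<sigma> k < N" using assms(2) permutes_in_image by fastforce
  have lti: "\<And>k. k < N \<Longrightarrow> inv \<sigma> k < N" using permutes_inv[OF assms(2)] permutes_in_image by fastforce
  have si: "\<And>k. \<sigma> (inv \<sigma> k) = k" using permutes_inverses(1)[OF assms(2)] .
  have is': "\<And>k. inv \<sigma> (\<sigma> k) = k" using permutes_inverses(2)[OF assms(2)] .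
  show ?thesis
  proof (rule sum.reindex_bij_witness[where i="\<lambda>J. map (\<lambda>k. J ! \<sigma> k) [0..<N]" and j="\<lambda>K. map (\<lambda>k. K ! inv \<sigma> k) [0..<N]"])
    fix K assume K: "K \<in> LS ?ys"
    then have lK: "length K = N" "\<forall>i<N. (xs ! \<sigma> i) (K ! i) \<noteq> 0" by (auto simp: LS_def)
    have e: "map (\<lambda>k. map (\<lambda>k. K ! inv \<sigma> k) [0..<N] ! \<sigma> k) [0..<N] = K"
      using lK lt is' by (auto intro!: nth_equalityI)
    show "map (\<lambda>k. map (\<lambda>k. K ! inv \<sigma> k) [0..<N] ! \<sigma> k) [0..<N] = K" by (rule e)
    show "map (\<lambda>k. K ! inv \<sigma> k) [0..<N] \<in> LS xs" unfolding LS_def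
    proof (intro CollectI conjI allI impI)
      show "length (map (\<lambda>k. K ! inv \<sigma> k) [0..<N]) = length xs" using assms(1) by simp
      fix i assume i: "i < length xs"
      then have "inv \<sigma> i < N" using lti assms(1) by simp
      then have "(xs ! \<sigma> (inv \<sigma> i)) (K ! inv \<sigma> i) \<noteq> 0" using lK by blast
      then show "(xs ! i) (map (\<lambda>k. K ! inv \<sigma> k) [0..<N] ! i) \<noteq> 0" using i assms(1) si by simp
    qed
    have "PR xs (map (\<lambda>k. K ! inv \<sigma> k) [0..<N]) = (\<Prod>i<N. (xs ! i) (K ! inv \<sigma> i))"
      unfolding PR_def using assms(1) by (auto intro!: prod.cong)
    also have "\<dots> = (\<Prod>i<N. (xs ! \<sigma> i) (K ! i))"
      using prod.permute[OF assms(2), of "\<lambda>i. (xs ! i) (K ! inv \<sigma> i)"] is' by (simp add: o_def)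
    also have "\<dots> = PR ?ys K" unfolding PR_def by (auto intro!: prod.cong)
    finally have "PR xs (map (\<lambda>k. K ! inv \<sigma> k) [0..<N]) = PR ?ys K" .
    then show "PR xs (map (\<lambda>k. K ! inv \<sigma> k) [0..<N]) * \<Phi> (map (\<lambda>k. map (\<lambda>k. K ! inv \<sigma> k) [0..<N] ! \<sigma> k) [0..<N])
        = PR ?ys K * \<Phi> K"
      by (simp only: e)
  next
    fix J assume J: "J \<in> LS xs"
    then have lJ: "length J = N" "\<forall>i<N. (xs ! i) (J ! i) \<noteq> 0" using assms(1) by (auto simp: LS_def)
    show "map (\<lambda>k. map (\<lambda>k. J ! \<sigma> k) [0..<N] ! inv \<sigma> k) [0..<N] = J"
      using lJ lti si by (auto intro!: nth_equalityI)
    show "map (\<lambda>k. J ! \<sigma> k) [0..<N] \<in> LS ?ys"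
      using lJ lt by (auto simp: LS_def)
  qed
qed

lemma skew:
  assumes "length xs = n" "\<sigma> permutes {..<n}"
  shows "qbr q (map (\<lambda>k. xs ! \<sigma> k) [0..<n]) = smul (of_int (sign \<sigma>)) (qbr q xs)"
proof
  fix k
  have "qbr q (map (\<lambda>k. xs ! \<sigma> k) [0..<n]) k = (\<Sum>J\<in>LS xs. PR xs J * qbr_basis q (map (\<lambda>k. J ! \<sigma> k) [0..<n]) k)"
    unfolding qbr_closed by (rule LS_perm[OF assms])
  also have "\<dots> = (\<Sum>J\<in>LS xs. of_int (sign \<sigma>) * (PR xs J * qbr_basis q J k))"
  proof (rule sum.cong)
    fix J assume "J \<in> LS xs"
    then have lJ: "length J = n" using assms(1) by (simp add: LS_def)
    have "qbr_basis q (map (\<lambda>k. J ! \<sigma> k) [0..<n]) k = of_int (sign \<sigma>) * qbr_basis q J k"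
      unfolding qbr_basis_apply
      using Acoef_perm[of \<sigma> J q] sum_list_perm[of \<sigma> J] assms(2) lJ by simp
    then show "PR xs J * qbr_basis q (map (\<lambda>k. J ! \<sigma> k) [0..<n]) k = of_int (sign \<sigma>) * (PR xs J * qbr_basis q J k)"
      by simp
  qed simp
  also have "\<dots> = smul (of_int (sign \<sigma>)) (qbr q xs) k"
    unfolding smul_def qbr_closed by (simp add: sum_distrib_left)
  finally show "qbr q (map (\<lambda>k. xs ! \<sigma> k) [0..<n]) k = smul (of_int (sign \<sigma>)) (qbr q xs) k" .
qed



lemma collapse:
  fixes a :: "'b \<Rightarrow> complex" and s :: "'b \<Rightarrow> int \<times> int"
  assumes "finite L"
  shows "(\<Sum>m\<in>{m. (\<Sum>l\<in>L. a l * (if m = s l then 1 else 0)) \<noteq> 0}. (\<Sum>l\<in>L. a l * (if m = s l then 1 else 0)) * G m)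
       = (\<Sum>l\<in>L. a l * G (s l))"
proof -
  define v where "v m = (\<Sum>l\<in>L. a l * (if m = s l then 1 else 0))" for m
  have supp: "{m. v m \<noteq> 0} \<subseteq> s ` L"
  proof
    fix m assume "m \<in> {m. v m \<noteq> 0}"
    then have "v m \<noteq> 0" by simp
    then obtain l where "l \<in> L" "a l * (if m = s l then 1 else 0) \<noteq> 0"
      unfolding v_def by (meson sum.neutral)
    then show "m \<in> s ` L" by (auto split: if_splits)
  qed
  have "(\<Sum>m\<in>{m. v m \<noteq> 0}. v m * G m) = (\<Sum>m\<in>s ` L. v m * G m)"
    by (rule sum.mono_neutral_left) (use assms supp in auto)
  also have "\<dots> = (\<Sum>m\<in>s ` L. \<Sum>l\<in>L. (if m = s l then a l * G m else 0))"
    unfolding v_def sum_distrib_right by (intro sum.cong refl) auto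
  also have "\<dots> = (\<Sum>l\<in>L. \<Sum>m\<in>s ` L. (if m = s l then a l * G m else 0))"
    by (rule sum.swap)
  also have "\<dots> = (\<Sum>l\<in>L. a l * G (s l))"
    using assms by (simp add: sum.delta)
  finally show ?thesis unfolding v_def .
qed

lemma nested:
  assumes "set ys \<subseteq> Vspace"
  shows "qbr q (qbr q ys # zs) t
     = (\<Sum>ls\<in>LS ys. PR ys ls * (1 / (q - inverse q) * Acoef q ls) *
          (\<Sum>ms\<in>LS zs. PR zs ms * qbr_basis q (sum_list ls # ms) t))"
proof -
  have v: "qbr q ys = (\<lambda>m. \<Sum>ls\<in>LS ys. (PR ys ls * (1 / (q - inverse q) * Acoef q ls)) * (if m = sum_list ls then 1 else 0))"
    unfolding qbr_closed qbr_basis_apply by (simp add: mult.assoc)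
  have "qbr q (qbr q ys # zs) t = (\<Sum>m\<in>{m. qbr q ys m \<noteq> 0}. qbr q ys m * mlext (\<lambda>ms. qbr_basis q (m # ms)) zs t)"
    unfolding qbr_def by simp
  also have "\<dots> = (\<Sum>ls\<in>LS ys. PR ys ls * (1 / (q - inverse q) * Acoef q ls) * mlext (\<lambda>ms. qbr_basis q (sum_list ls # ms)) zs t)"
    unfolding v by (rule collapse[OF finite_LS[OF assms]])
  also have "\<dots> = (\<Sum>ls\<in>LS ys. PR ys ls * (1 / (q - inverse q) * Acoef q ls) *
          (\<Sum>ms\<in>LS zs. PR zs ms * qbr_basis q (sum_list ls # ms) t))"
    by (simp add: mlext_closed)
  finally show ?thesis .
qed

lemma PR_append: "length ls = length ys \<Longrightarrow> PR (ys @ zs) (ls @ ms) = PR ys ls * PR zs ms"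
proof (induction ys arbitrary: ls)
  case Nil then show ?case by (simp add: PR_def)
next
  case (Cons y ys)
  then obtain l ls' where "ls = l # ls'" "length ls' = length ys" by (cases ls) auto
  then show ?case using Cons.IH by (simp add: PR_Cons)
qed

lemma combine:
  assumes "length ys = n"
  shows "(\<Sum>ls\<in>LS ys. \<Sum>ms\<in>LS zs. PR ys ls * PR zs ms * \<Psi> ls ms)
       = (\<Sum>K\<in>LS (ys @ zs). PR (ys @ zs) K * \<Psi> (take n K) (drop n K))"
proof -
  have bij: "bij_betw (\<lambda>(ls, ms). ls @ ms) (LS ys \<times> LS zs) (LS (ys @ zs))"
  proof (rule bij_betw_byWitness[where f'="\<lambda>K. (take n K, drop n K)"])
    show "\<forall>a\<in>LS ys \<times> LS zs. (\<lambda>K. (take n K, drop n K)) ((\<lambda>(ls, ms). ls @ ms) a) = a"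
      using assms by (auto simp: LS_def)
    show "\<forall>a'\<in>LS (ys @ zs). (\<lambda>(ls, ms). ls @ ms) ((\<lambda>K. (take n K, drop n K)) a') = a'" by auto
    show "(\<lambda>(ls, ms). ls @ ms) ` (LS ys \<times> LS zs) \<subseteq> LS (ys @ zs)"
    proof
      fix x assume "x \<in> (\<lambda>(ls, ms). ls @ ms) ` (LS ys \<times> LS zs)"
      then obtain ls ms where x: "x = ls @ ms" "ls \<in> LS ys" "ms \<in> LS zs" by auto
      then have l: "length ls = length ys" "length ms = length zs"
        "\<forall>i<length ys. (ys ! i) (ls ! i) \<noteq> 0" "\<forall>i<length zs. (zs ! i) (ms ! i) \<noteq> 0" by (auto simp: LS_def)
      show "x \<in> LS (ys @ zs)" unfolding LS_def x(1)
      proof (intro CollectI conjI allI impI)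
        show "length (ls @ ms) = length (ys @ zs)" using l by simp
        fix i assume i: "i < length (ys @ zs)"
        show "((ys @ zs) ! i) ((ls @ ms) ! i) \<noteq> 0"
        proof (cases "i < length ys")
          case True then show ?thesis using l by (simp add: nth_append)
        next
          case False then show ?thesis using l i by (simp add: nth_append)
        qed
      qed
    qed
    show "(\<lambda>K. (take n K, drop n K)) ` LS (ys @ zs) \<subseteq> LS ys \<times> LS zs"
    proof
      fix x assume "x \<in> (\<lambda>K. (take n K, drop n K)) ` LS (ys @ zs)"
      then obtain K where x: "x = (take n K, drop n K)" "K \<in> LS (ys @ zs)" by auto
      then have l: "length K = length ys + length zs" "\<forall>i<length ys + length zs. ((ys @ zs) ! i) (K ! i) \<noteq> 0"
        by (auto simp: LS_def)
      have "take n K \<in> LS ys" unfolding LS_def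
      proof (intro CollectI conjI allI impI)
        show "length (take n K) = length ys" using l assms by simp
        fix i assume "i < length ys"
        then show "(ys ! i) (take n K ! i) \<noteq> 0" using l(2)[rule_format, of i] assms by (simp add: nth_append)
      qed
      moreover have "drop n K \<in> LS zs" unfolding LS_def
      proof (intro CollectI conjI allI impI)
        show "length (drop n K) = length zs" using l assms by simp
        fix i assume "i < length zs"
        then show "(zs ! i) (drop n K ! i) \<noteq> 0" using l(2)[rule_format, of "n + i"] assms l(1) by (simp add: nth_append)
      qed
      ultimately show "x \<in> LS ys \<times> LS zs" using x(1) by simp
    qed
  qed
  have "(\<Sum>ls\<in>LS ys. \<Sum>ms\<in>LS zs. PR ys ls * PR zs ms * \<Psi> ls ms)
      = (\<Sum>x\<in>LS ys \<times> LS zs. (\<lambda>K. PR (ys @ zs) K * \<Psi> (take n K) (drop n K)) ((\<lambda>(ls, ms). ls @ ms) x))"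
    unfolding sum.cartesian_product
  proof (rule sum.cong[OF refl])
    fix x assume "x \<in> LS ys \<times> LS zs"
    then obtain ls ms where x: "x = (ls, ms)" "length ls = length ys" by (auto simp: LS_def)
    then show "(case x of (ls, ms) \<Rightarrow> PR ys ls * PR zs ms * \<Psi> ls ms) =
       (\<lambda>K. PR (ys @ zs) K * \<Psi> (take n K) (drop n K)) ((\<lambda>(ls, ms). ls @ ms) x)"
      using assms by (simp add: PR_append)
  qed
  also have "\<dots> = (\<Sum>K\<in>LS (ys @ zs). PR (ys @ zs) K * \<Psi> (take n K) (drop n K))"
    by (rule sum.reindex_bij_betw[OF bij])
  finally show ?thesis .
qed



lemma jac_term:
  assumes "1 \<le> n" "set xs \<subseteq> Vspace" "length xs = 2*n-1" "\<sigma> permutes {..<2*n-1}"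
  shows "qbr q (qbr q (map (\<lambda>k. xs ! \<sigma> k) [0..<n]) # map (\<lambda>k. xs ! \<sigma> k) [n..<2*n-1]) t
    = (\<Sum>J\<in>LS xs. PR xs J * ((1 / (q - inverse q))^2 * (if t = sum_list J then 1 else 0) *
          (Acoef q (F1 (\<lambda>k. J ! k) n \<sigma>) * Acoef q (F2 (\<lambda>k. J ! k) n \<sigma>))))"
proof -
  define N where "N = 2*n-1"
  define c where "c = 1 / (q - inverse q)"
  define ys where "ys = map (\<lambda>k. xs ! \<sigma> k) [0..<n]"
  define zs where "zs = map (\<lambda>k. xs ! \<sigma> k) [n..<N]"
  have nN: "n \<le> N" using assms(1) by (simp add: N_def)
  have sp: "\<sigma> permutes {..<N}" using assms(4) by (simp add: N_def)
  have lt: "\<And>k. k < N \<Longrightarrow> \<sigma> k < N" using sp permutes_in_image by fastforce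
  have ysV: "set ys \<subseteq> Vspace"
  proof
    fix y assume "y \<in> set ys"
    then obtain k where "k < n" "y = xs ! \<sigma> k" by (auto simp: ys_def)
    then have "y \<in> set xs" using lt[of k] nN assms(3) by (simp add: N_def)
    then show "y \<in> Vspace" using assms(2) by auto
  qed
  have lys: "length ys = n" by (simp add: ys_def)
  have upt: "[0..<N] = [0..<n] @ [n..<N]" using upt_add_eq_append[of 0 n "N - n"] nN by simp
  have app: "ys @ zs = map (\<lambda>k. xs ! \<sigma> k) [0..<N]" unfolding ys_def zs_def upt by simp
  define \<Psi> where "\<Psi> ls ms = c * Acoef q ls * qbr_basis q (sum_list ls # ms) t" for ls ms
  have "qbr q (qbr q ys # zs) t = (\<Sum>ls\<in>LS ys. \<Sum>ms\<in>LS zs. PR ys ls * PR zs ms * \<Psi> ls ms)"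
    unfolding nested[OF ysV] \<Psi>_def c_def by (simp add: sum_distrib_left mult_ac)
  also have "\<dots> = (\<Sum>K\<in>LS (ys @ zs). PR (ys @ zs) K * \<Psi> (take n K) (drop n K))"
    by (rule combine[OF lys])
  also have "\<dots> = (\<Sum>J\<in>LS xs. PR xs J * \<Psi> (take n (map (\<lambda>k. J ! \<sigma> k) [0..<N])) (drop n (map (\<lambda>k. J ! \<sigma> k) [0..<N])))"
    unfolding app by (rule LS_perm[OF _ sp]) (simp add: assms(3) N_def)
  also have "\<dots> = (\<Sum>J\<in>LS xs. PR xs J * (c^2 * (if t = sum_list J then 1 else 0) *
          (Acoef q (F1 (\<lambda>k. J ! k) n \<sigma>) * Acoef q (F2 (\<lambda>k. J ! k) n \<sigma>))))"
  proof (rule sum.cong[OF refl])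
    fix J assume "J \<in> LS xs"
    then have lJ: "length J = N" using assms(3) by (simp add: LS_def N_def)
    let ?Js = "map (\<lambda>k. J ! \<sigma> k) [0..<N]"
    have tk: "take n ?Js = F1 (\<lambda>k. J ! k) n \<sigma>" using nN by (simp add: F1_def take_map)
    have dr: "drop n ?Js = map (\<lambda>k. J ! \<sigma> k) [n..<2*n-1]" using nN by (simp add: drop_map N_def)
    have f2: "sum_list (take n ?Js) # drop n ?Js = F2 (\<lambda>k. J ! k) n \<sigma>"
      unfolding tk dr F2_def ..
    have "sum_list (F2 (\<lambda>k. J ! k) n \<sigma>) = sum_list (take n ?Js) + sum_list (drop n ?Js)"
      unfolding f2[symmetric] by (simp only: sum_list.Cons)
    also have "\<dots> = sum_list ?Js" by (simp only: sum_list_append[symmetric] append_take_drop_id)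
    also have "\<dots> = sum_list J" using sum_list_perm[of \<sigma> J] sp lJ by simp
    finally have sl: "sum_list (F2 (\<lambda>k. J ! k) n \<sigma>) = sum_list J" .
    show "PR xs J * \<Psi> (take n ?Js) (drop n ?Js) = PR xs J * (c^2 * (if t = sum_list J then 1 else 0) *
          (Acoef q (F1 (\<lambda>k. J ! k) n \<sigma>) * Acoef q (F2 (\<lambda>k. J ! k) n \<sigma>)))"
      unfolding \<Psi>_def f2 qbr_basis_apply sl unfolding tk c_def by (simp add: power2_eq_square mult_ac)
  qed
  finally show ?thesis unfolding ys_def zs_def c_def N_def .
qed

lemma jacobi:
  assumes "even n" "2 \<le> n" "(q::complex) \<noteq> 0" "set xs \<subseteq> Vspace" "length xs = 2*n-1"
  shows "(\<Sum>\<sigma>\<in>ShS n (2*n-1). of_int (sign \<sigma>) *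
           qbr q (qbr q (map (\<lambda>k. xs ! \<sigma> k) [0..<n]) # map (\<lambda>k. xs ! \<sigma> k) [n..<2*n-1]) t) = 0"
proof -
  define c where "c = 1 / (q - inverse q)"
  have n1: "1 \<le> n" using assms(2) by simp
  have "(\<Sum>\<sigma>\<in>ShS n (2*n-1). of_int (sign \<sigma>) *
           qbr q (qbr q (map (\<lambda>k. xs ! \<sigma> k) [0..<n]) # map (\<lambda>k. xs ! \<sigma> k) [n..<2*n-1]) t)
      = (\<Sum>\<sigma>\<in>ShS n (2*n-1). \<Sum>J\<in>LS xs. PR xs J * (c^2 * (if t = sum_list J then 1 else 0)) * Gt q (\<lambda>k. J ! k) n \<sigma>)"
  proof (rule sum.cong[OF refl])
    fix \<sigma> assume "\<sigma> \<in> ShS n (2*n-1)"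
    then have sp: "\<sigma> permutes {..<2*n-1}" by (simp add: ShS_def)
    show "of_int (sign \<sigma>) * qbr q (qbr q (map (\<lambda>k. xs ! \<sigma> k) [0..<n]) # map (\<lambda>k. xs ! \<sigma> k) [n..<2*n-1]) t
       = (\<Sum>J\<in>LS xs. PR xs J * (c^2 * (if t = sum_list J then 1 else 0)) * Gt q (\<lambda>k. J ! k) n \<sigma>)"
      unfolding jac_term[OF n1 assms(4,5) sp]
      by (simp add: sum_distrib_left Gt_def c_def mult_ac)
  qed
  also have "\<dots> = (\<Sum>J\<in>LS xs. PR xs J * (c^2 * (if t = sum_list J then 1 else 0)) * (\<Sum>\<sigma>\<in>ShS n (2*n-1). Gt q (\<lambda>k. J ! k) n \<sigma>))"
    by (subst sum.swap) (simp add: sum_distrib_left)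
  also have "\<dots> = 0" using core_shuffle[OF assms(1-3)] by simp
  finally show ?thesis .
qed


theorem proposition7:
  fixes q :: complex and n :: nat
  assumes "q \<noteq> 0" and "q \<noteq> 1" and "q \<noteq> -1"
    and "even n" and "n \<ge> 2"
  shows "sh_n_Lie n (qbr q)"
  unfolding sh_n_Lie_def
proof (intro conjI)
  show "\<forall>xs. set xs \<subseteq> Vspace \<and> length xs = n \<longrightarrow> qbr q xs \<in> Vspace"
    using qbr_in_V by blast
  show "\<forall>xs \<sigma>. set xs \<subseteq> Vspace \<and> length xs = n \<and> \<sigma> permutes {..<n} \<longrightarrow>
        qbr q (map (\<lambda>k. xs ! \<sigma> k) [0..<n]) = smul (of_int (sign \<sigma>)) (qbr q xs)"
    using skew by blast
  show "\<forall>xs. set xs \<subseteq> Vspace \<and> length xs = 2 * n - 1 \<longrightarrow>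
        (\<lambda>t. \<Sum>\<sigma>\<in>{\<sigma>. \<sigma> permutes {..<2 * n - 1} \<and>
                  (\<forall>i j. i < j \<and> j < n \<longrightarrow> \<sigma> i < \<sigma> j) \<and>
                  (\<forall>i j. n \<le> i \<and> i < j \<and> j < 2 * n - 1 \<longrightarrow> \<sigma> i < \<sigma> j)}.
           of_int (sign \<sigma>) *
             qbr q (qbr q (map (\<lambda>k. xs ! \<sigma> k) [0..<n]) # map (\<lambda>k. xs ! \<sigma> k) [n..<2 * n - 1]) t)
        = (\<lambda>_. 0)"
  proof (intro allI impI ext)
    fix xs t assume h: "set xs \<subseteq> Vspace \<and> length xs = 2 * n - 1"
    show "(\<Sum>\<sigma>\<in>{\<sigma>. \<sigma> permutes {..<2 * n - 1} \<and>
                  (\<forall>i j. i < j \<and> j < n \<longrightarrow> \<sigma> i < \<sigma> j) \<and>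
                  (\<forall>i j. n \<le> i \<and> i < j \<and> j < 2 * n - 1 \<longrightarrow> \<sigma> i < \<sigma> j)}.
           of_int (sign \<sigma>) *
             qbr q (qbr q (map (\<lambda>k. xs ! \<sigma> k) [0..<n]) # map (\<lambda>k. xs ! \<sigma> k) [n..<2 * n - 1]) t) = 0"
      using jacobi[OF assms(4) assms(5) assms(1) conjunct1[OF h] conjunct2[OF h], of t]
      unfolding ShS_def .
  qed
qed

end
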